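(* Let $T$ be a DAT with duration vector $d$, let $v$ be a module of $T$, and let $T^v$, $\tilde v$, $d^v$ be as defined below, and assume $\mathrm{mt}(T_v,d|_{B_v})<\infty$. Then for every successful attack $\mathcal{O}$ on $T^v$ there exists a successful attack $\mathcal{O}'$ on $T$ with $\mathrm{t}(\mathcal{O}',d)=\mathrm{t}(\mathcal{O},d^v)$.
   Context: A dynamic attack tree (DAT) is a finite rooted directed acyclic graph $T=(N,E)$ (edges point from a node to its children) with root $\mathrm{R}_T$, in which each node $v$ has a type $\gamma(v)\in\{\mathtt{BAS},\mathtt{OR},\mathtt{AND},\mathtt{SAND}\}$, with $\gamma(v)=\mathtt{BAS}$ if and only if $v$ is a leaf. Every node of type $\mathtt{SAND}$ comes with a fixed linear ordering $v_1,\dots,v_n$ of its children, written $v=\mathtt{SAND}(v_1,\dots,v_n)$; similarly one writes $v=\mathtt{OR}(v_1,\dots,v_n)$, $v=\mathtt{AND}(v_1,\dots,v_n)$. $N_\gamma$ denotes the set of nodes of type $\gamma$. For a node $v$, $T_v$ is the sub-DAG induced on the descendants of $v$ (all nodes reachable from $v$ by a directed path, including $v$), rooted at $v$, with the inherited types and orderings, and $B_v$ is the set of nodes of $T_v$ of type $\mathtt{BAS}$. A module of $T$ is a node $v\in N\setminus N_{\mathtt{BAS}}$ such that every directed path from a node outside $T_v$ to a node of $T_v$ passes through $v$; equivalently, every node of $T_v$ other than $v$ has all its parents inside $T_v$. An attack on $T$ is a pair $\mathcal{O}=(A,\prec)$ where $A\subseteq N_{\mathtt{BAS}}$ and $\prec$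 is a strict partial order on $A$. An attack $(A,\prec)$ reaches a node $v$, defined recursively: if $v\in N_{\mathtt{BAS}}$, iff $v\in A$; if $v=\mathtt{OR}(v_1,\dots,v_n)$, iff it reaches some $v_i$; if $v=\mathtt{AND}(v_1,\dots,v_n)$, iff it reaches all $v_i$; if $v=\mathtt{SAND}(v_1,\dots,v_n)$, iff it reaches all $v_i$ and for every $i<n$, every $a\in A\cap B_{v_i}$ and every $a'\in A\cap B_{v_{i+1}}$ one has $a\prec a'$. An attack is successful if it reaches the root. A duration vector is $d\in\mathbb{R}_{\ge0}^{N_{\mathtt{BAS}}}$. For an attack $\mathcal{O}=(A,\prec)$, $\mathrm{t}(\mathcal{O},d)=\max_C\sum_{a\in C}d_a$, the maximum over all maximal chains $C$ of $(A,\prec)$ (equal to $0$ if $A=\varnothing$). The min time $\mathrm{mt}(T,d)$ is the minimum of $\mathrm{t}(\mathcal{O},d)$ over successful attacks $\mathcal{O}$ on $T$ ($\infty$ if there are none). For a module $v$: $T^v$ is the DAT obtained from $T$ by deleting all nodes of $T_v$ other than $v$ (with their incident edges) and turning $v$ into a new leaf $\tilde v$ of type $\mathtt{BAS}$ (keeping its incoming edges and its position in the child orderings of its $\mathtt{SAND}$-parents); $d^v$ is the duration vector on the BASes of $T^v$ given by $d^v_a=d_a$ for $a\in N_{\mathtt{BAS}}\setminus B_v$ and $d^v_{\tilde v}=\mathrm{mt}(T_v,d|_{B_v})$. *)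

theory Defs
  imports "HOL-Analysis.Analysis"
begin

datatype gate = BAS | OR | AND | SAND

text \<open>A dynamic attack tree over node type 'n: node set, gate type, ordered list of
children (the order matters only for SAND nodes), and root.\<close>
record 'n dat =
  nodes :: "'n set"
  gtype   :: "'n \<Rightarrow> gate"
  ch    :: "'n \<Rightarrow> 'n list"
  root  :: "'n"

definition edges :: "('n, 'z) dat_scheme \<Rightarrow> ('n \<times> 'n) set" where
  "edges T = {(v, w). v \<in> nodes T \<and> w \<in> set (ch T v)}"

definition wf_dat :: "('n, 'z) dat_scheme \<Rightarrow> bool" where
  "wf_dat T \<longleftrightarrow> finite (nodes T) \<and> root T \<in> nodes T
     \<and> (\<forall>v\<in>nodes T. set (ch T v) \<subseteq> nodes T \<and> distinct (ch T v))
     \<and> acyclic (edges T)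
     \<and> (\<forall>v\<in>nodes T. (root T, v) \<in> (edges T)\<^sup>*)
     \<and> (\<forall>v\<in>nodes T. gtype T v = BAS \<longleftrightarrow> ch T v = [])"

definition bas_nodes :: "('n, 'z) dat_scheme \<Rightarrow> 'n set" where
  "bas_nodes T = {v \<in> nodes T. gtype T v = BAS}"

definition desc :: "('n, 'z) dat_scheme \<Rightarrow> 'n \<Rightarrow> 'n set" where
  "desc T v = {w. (v, w) \<in> (edges T)\<^sup>*}"

definition bas_below :: "('n, 'z) dat_scheme \<Rightarrow> 'n \<Rightarrow> 'n set" where
  "bas_below T v = {w \<in> desc T v. gtype T w = BAS}"

definition is_module :: "('n, 'z) dat_scheme \<Rightarrow> 'n \<Rightarrow> bool" where
  "is_module T v \<longleftrightarrow> v \<in> nodes T \<and> gtype T v \<noteq> BAS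
     \<and> (\<forall>w \<in> desc T v - {v}. \<forall>u. (u, w) \<in> edges T \<longrightarrow> u \<in> desc T v)"

definition is_attack :: "('n, 'z) dat_scheme \<Rightarrow> 'n set \<times> ('n \<times> 'n) set \<Rightarrow> bool" where
  "is_attack T Att \<longleftrightarrow> fst Att \<subseteq> bas_nodes T \<and> snd Att \<subseteq> fst Att \<times> fst Att
     \<and> irrefl (snd Att) \<and> trans (snd Att)"

inductive reaches :: "('n, 'z) dat_scheme \<Rightarrow> 'n set \<times> ('n \<times> 'n) set \<Rightarrow> 'n \<Rightarrow> bool"
  for T Att where
  r_bas: "gtype T v = BAS \<Longrightarrow> v \<in> fst Att \<Longrightarrow> reaches T Att v"
| r_or: "gtype T v = OR \<Longrightarrow> w \<in> set (ch T v) \<Longrightarrow> reaches T Att w \<Longrightarrow> reaches T Att v"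
| r_and: "gtype T v = AND \<Longrightarrow> (\<forall>w \<in> set (ch T v). reaches T Att w) \<Longrightarrow> reaches T Att v"
| r_sand: "gtype T v = SAND \<Longrightarrow> (\<forall>w \<in> set (ch T v). reaches T Att w) \<Longrightarrow>
     (\<forall>i. Suc i < length (ch T v) \<longrightarrow>
        (\<forall>a \<in> fst Att \<inter> bas_below T (ch T v ! i).
          \<forall>a' \<in> fst Att \<inter> bas_below T (ch T v ! Suc i). (a, a') \<in> snd Att)) \<Longrightarrow>
     reaches T Att v"

definition successful :: "('n, 'z) dat_scheme \<Rightarrow> 'n set \<times> ('n \<times> 'n) set \<Rightarrow> bool" where
  "successful T Att \<longleftrightarrow> is_attack T Att \<and> reaches T Att (root T)"

definition is_chain :: "('n \<times> 'n) set \<Rightarrow> 'n set \<Rightarrow> bool" where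
  "is_chain P C \<longleftrightarrow> (\<forall>a\<in>C. \<forall>b\<in>C. a \<noteq> b \<longrightarrow> (a, b) \<in> P \<or> (b, a) \<in> P)"

definition maximal_chain :: "'n set \<times> ('n \<times> 'n) set \<Rightarrow> 'n set \<Rightarrow> bool" where
  "maximal_chain Att C \<longleftrightarrow> C \<subseteq> fst Att \<and> is_chain (snd Att) C
     \<and> (\<forall>C'. C \<subseteq> C' \<and> C' \<subseteq> fst Att \<and> is_chain (snd Att) C' \<longrightarrow> C' = C)"

definition att_time :: "'n set \<times> ('n \<times> 'n) set \<Rightarrow> ('n \<Rightarrow> real) \<Rightarrow> real" where
  "att_time Att d = (if fst Att = {} then 0 else Max ((\<lambda>C. \<Sum>a\<in>C. d a) ` {C. maximal_chain Att C}))"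

text \<open>Min time (\<infinity> if no successful attack).\<close>
definition min_time :: "('n, 'z) dat_scheme \<Rightarrow> ('n \<Rightarrow> real) \<Rightarrow> ereal" where
  "min_time T d = (INF Att \<in> {Att. successful T Att}. ereal (att_time Att d))"

definition sub_dat :: "'n dat \<Rightarrow> 'n \<Rightarrow> 'n dat" where
  "sub_dat T v = \<lparr>nodes = desc T v, gtype = gtype T, ch = ch T, root = v\<rparr>"

text \<open>T^v: delete the proper descendants of v and turn v itself into a BAS leaf
(the new leaf \<tilde>v is represented by the node v).\<close>
definition contract :: "'n dat \<Rightarrow> 'n \<Rightarrow> 'n dat" where
  "contract T v = \<lparr>nodes = nodes T - (desc T v - {v}), gtype = (gtype T)(v := BAS),
                   ch = (ch T)(v := []), root = root T\<rparr>"

text \<open>d^v (d restricted to B_v is used for T_v; only values on B_v matter there).\<close>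
definition contract_dur :: "'n dat \<Rightarrow> 'n \<Rightarrow> ('n \<Rightarrow> real) \<Rightarrow> 'n \<Rightarrow> real" where
  "contract_dur T v d = d(v := real_of_ereal (min_time (sub_dat T v) d))"

end

theory Submission
  imports Defs
begin


lemma is_chain_insert: "is_chain P (insert z C) \<longleftrightarrow> is_chain P C \<and> (\<forall>x\<in>C. x \<noteq> z \<longrightarrow> (x,z) \<in> P \<or> (z,x) \<in> P)"
  unfolding is_chain_def by auto

lemma maxchainD: "maximal_chain Att C \<Longrightarrow> z \<in> fst Att \<Longrightarrow> is_chain (snd Att) (insert z C) \<Longrightarrow> z \<in> C"
  unfolding maximal_chain_def by blast

lemma maxchain_exists:
  assumes "finite (fst Att)" shows "\<exists>C. maximal_chain Att C"
proof -
  let ?S = "{C. C \<subseteq> fst Att \<and> is_chain (snd Att) C}"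
  have fin: "finite ?S" using assms by (auto intro: finite_subset[of _ "Pow (fst Att)"])
  have ne: "{} \<in> ?S" by (simp add: is_chain_def)
  obtain C where C: "C \<in> ?S" "\<forall>C'\<in>?S. card C' \<le> card C"
  proof -
    have "Max (card ` ?S) \<in> card ` ?S" using fin ne by (intro Max_in) auto
    then obtain C where "C \<in> ?S" "card C = Max (card ` ?S)" by auto
    moreover have "\<forall>C'\<in>?S. card C' \<le> Max (card ` ?S)" using fin by auto
    ultimately show ?thesis using that by auto
  qed
  have "maximal_chain Att C"
    unfolding maximal_chain_def
  proof (intro conjI allI impI)
    show "C \<subseteq> fst Att" "is_chain (snd Att) C" using C by auto
    fix C' assume h: "C \<subseteq> C' \<and> C' \<subseteq> fst Att \<and> is_chain (snd Att) C'"
    then have "card C' \<le> card C" using C by auto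
    moreover have "finite C'" using h assms finite_subset by blast
    ultimately show "C' = C" using h card_subset_eq by (metis antisym card_mono)
  qed
  then show ?thesis by blast
qed

lemma maxchain_ne: "maximal_chain Att M \<Longrightarrow> fst Att \<noteq> {} \<Longrightarrow> M \<noteq> {}"
  unfolding maximal_chain_def is_chain_def by (metis empty_subsetI insert_not_empty singletonD subset_iff)

locale repl =
  fixes A :: "'n set" and P and B :: "'n set" and Q and v :: 'n
  assumes finA: "finite A" and finB: "finite B"
    and PA: "P \<subseteq> A \<times> A" and irP: "irrefl P" and trP: "trans P"
    and QB: "Q \<subseteq> B \<times> B" and irQ: "irrefl Q" and trQ: "trans Q"
    and vA: "v \<in> A" and Bne: "B \<noteq> {}" and disj: "A \<inter> B = {}"
begin

definition A' where "A' = A - {v} \<union> B"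
definition f where "f x = (if x \<in> B then v else x)"
definition P' where "P' = {(x,y). x \<in> A' \<and> y \<in> A' \<and> (if x \<in> B \<and> y \<in> B then (x,y) \<in> Q else (f x, f y) \<in> P)}"

lemma vB: "v \<notin> B" using vA disj by auto

lemma P'_sub: "P' \<subseteq> A' \<times> A'" unfolding P'_def by auto

lemma P'_irrefl: "irrefl P'"
  using irP irQ unfolding irrefl_def P'_def by auto

lemma P'_trans: "trans P'"
proof (rule transI)
  fix x y z assume xy: "(x,y) \<in> P'" and yz: "(y,z) \<in> P'"
  have xz: "x \<in> A'" "z \<in> A'" using xy yz unfolding P'_def by auto
  show "(x,z) \<in> P'"
  proof (cases "x \<in> B \<and> z \<in> B")
    case True
    show ?thesis
    proof (cases "y \<in> B")
      case True
      then have "(x,y) \<in> Q" "(y,z) \<in> Q" using xy yz \<open>x \<in> B \<and> z \<in> B\<close> unfolding P'_def by auto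
      then show ?thesis using trQ xz \<open>x \<in> B \<and> z \<in> B\<close> unfolding P'_def trans_def by auto
    next
      case False
      then have "(v, y) \<in> P" "(y, v) \<in> P" using xy yz \<open>x \<in> B \<and> z \<in> B\<close> unfolding P'_def f_def by auto
      then have "(v,v) \<in> P" using trP unfolding trans_def by blast
      then show ?thesis using irP unfolding irrefl_def by blast
    qed
  next
    case False
    have "(f x, f y) \<in> P \<or> f x = f y" using xy unfolding P'_def f_def by (auto split: if_splits)
    moreover have "(f y, f z) \<in> P \<or> f y = f z" using yz unfolding P'_def f_def by (auto split: if_splits)
    moreover have "(f x, f y) \<in> P \<or> (f y, f z) \<in> P"
      using xy yz False unfolding P'_def by (auto split: if_splits)
    ultimately have "(f x, f z) \<in> P" using trP unfolding trans_def by metis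
    then show ?thesis using False xz unfolding P'_def by auto
  qed
qed

lemma A'_fin: "finite A'" using finA finB unfolding A'_def by auto
lemma vA': "v \<notin> A'" using vB unfolding A'_def by auto
lemma P'_same: "x \<notin> B \<Longrightarrow> y \<notin> B \<Longrightarrow> (x,y) \<in> P' \<longleftrightarrow> x \<in> A' \<and> y \<in> A' \<and> (x,y) \<in> P"
  unfolding P'_def f_def by auto
lemma P'_BB: "x \<in> B \<Longrightarrow> y \<in> B \<Longrightarrow> (x,y) \<in> P' \<longleftrightarrow> (x,y) \<in> Q"
  unfolding P'_def A'_def using QB by auto
lemma P'_mixed1: "x \<notin> B \<Longrightarrow> y \<in> B \<Longrightarrow> (x,y) \<in> P' \<longleftrightarrow> x \<in> A' \<and> (x,v) \<in> P"
  unfolding P'_def f_def A'_def by auto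
lemma P'_mixed2: "x \<in> B \<Longrightarrow> y \<notin> B \<Longrightarrow> (x,y) \<in> P' \<longleftrightarrow> y \<in> A' \<and> (v,y) \<in> P"
  unfolding P'_def f_def A'_def by auto

lemma mc_to:
  assumes mc: "maximal_chain (A',P') C'"
  shows "maximal_chain (A,P) (f ` C')"
proof -
  have sub: "C' \<subseteq> A'" and ch: "is_chain P' C'" using mc unfolding maximal_chain_def by auto
  have img: "f ` C' \<subseteq> A" using sub vA unfolding f_def A'_def by auto
  have chn: "is_chain P (f ` C')"
    unfolding is_chain_def
  proof (intro ballI impI)
    fix a b assume "a \<in> f ` C'" "b \<in> f ` C'" "a \<noteq> b"
    then obtain x y where xy: "x \<in> C'" "y \<in> C'" "a = f x" "b = f y" "f x \<noteq> f y" by auto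
    then have "x \<noteq> y" by auto
    then have "(x,y) \<in> P' \<or> (y,x) \<in> P'" using ch xy unfolding is_chain_def by auto
    moreover have "\<not> (x \<in> B \<and> y \<in> B)" using xy unfolding f_def by auto
    ultimately show "(a,b) \<in> P \<or> (b,a) \<in> P" using xy unfolding P'_def by auto
  qed
  show ?thesis
    unfolding maximal_chain_def
  proof (intro conjI allI impI)
    show "f ` C' \<subseteq> fst (A,P)" "is_chain (snd (A,P)) (f ` C')" using img chn by auto
    fix D assume hD: "f ` C' \<subseteq> D \<and> D \<subseteq> fst (A,P) \<and> is_chain (snd (A,P)) D"
    show "D = f ` C'"
    proof (rule ccontr)
      assume "D \<noteq> f ` C'"
      then obtain z where z: "z \<in> D" "z \<notin> f ` C'" using hD by auto
      show False
      proof (cases "z = v")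
        case False
        have zA: "z \<in> A'" "z \<notin> B" using z hD False disj unfolding A'_def by auto
        have "is_chain P' (insert z C')"
          unfolding is_chain_insert
        proof (intro conjI ballI impI)
          show "is_chain P' C'" by (rule ch)
          fix x assume x: "x \<in> C'" "x \<noteq> z"
          have "f x \<in> D" using x hD by auto
          moreover have "f x \<noteq> z" using x z by auto
          ultimately have "(f x, z) \<in> P \<or> (z, f x) \<in> P" using hD z unfolding is_chain_def by auto
          moreover have "f z = z" using zA unfolding f_def by auto
          ultimately show "(x,z) \<in> P' \<or> (z,x) \<in> P'" using x sub zA unfolding P'_def by auto
        qed
        then have "z \<in> C'" using maxchainD[OF mc] zA by auto
        then show False using z zA unfolding f_def by force
      next
        case True
        have nB: "\<forall>x\<in>C'. x \<notin> B" using z True unfolding f_def by force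
        obtain b where b: "b \<in> B" using Bne by auto
        have "is_chain P' (insert b C')"
          unfolding is_chain_insert
        proof (intro conjI ballI impI)
          show "is_chain P' C'" by (rule ch)
          fix x assume x: "x \<in> C'" "x \<noteq> b"
          have fx: "f x = x" using nB x unfolding f_def by auto
          have "x \<in> D" using x hD fx by force
          moreover have "x \<noteq> v" using x z True fx by force
          ultimately have "(x, v) \<in> P \<or> (v, x) \<in> P" using hD z True unfolding is_chain_def by auto
          then show "(x,b) \<in> P' \<or> (b,x) \<in> P'" using x sub nB b P'_mixed1 P'_mixed2 by auto
        qed
        then have "b \<in> C'" using maxchainD[OF mc] b unfolding A'_def by auto
        then show False using nB b by auto
      qed
    qed
  qed
qed

lemma mc_B:
  assumes mc: "maximal_chain (A',P') C'" and ne: "C' \<inter> B \<noteq> {}"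
  shows "maximal_chain (B,Q) (C' \<inter> B)"
proof -
  have sub: "C' \<subseteq> A'" and ch: "is_chain P' C'" using mc unfolding maximal_chain_def by auto
  have chB: "is_chain Q (C' \<inter> B)" using ch P'_BB unfolding is_chain_def by auto
  obtain b0 where b0: "b0 \<in> C'" "b0 \<in> B" using ne by auto
  show ?thesis
    unfolding maximal_chain_def
  proof (intro conjI allI impI)
    show "C' \<inter> B \<subseteq> fst (B,Q)" "is_chain (snd (B,Q)) (C' \<inter> B)" using chB by auto
    fix D assume hD: "C' \<inter> B \<subseteq> D \<and> D \<subseteq> fst (B,Q) \<and> is_chain (snd (B,Q)) D"
    have "D \<subseteq> C' \<inter> B"
    proof
      fix z assume zD: "z \<in> D"
      then have zB: "z \<in> B" using hD by auto
      have "is_chain P' (insert z C')"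
        unfolding is_chain_insert
      proof (intro conjI ballI impI)
        show "is_chain P' C'" by (rule ch)
        fix x assume x: "x \<in> C'" "x \<noteq> z"
        show "(x,z) \<in> P' \<or> (z,x) \<in> P'"
        proof (cases "x \<in> B")
          case True
          then have "x \<in> D" using x hD by auto
          then have "(x,z) \<in> Q \<or> (z,x) \<in> Q" using hD zD x unfolding is_chain_def by auto
          then show ?thesis using P'_BB True zB by auto
        next
          case False
          have "x \<noteq> b0" using False b0 by auto
          then have "(x,b0) \<in> P' \<or> (b0,x) \<in> P'" using ch x b0 unfolding is_chain_def by auto
          then show ?thesis using P'_mixed1 P'_mixed2 False b0 zB by auto
        qed
      qed
      then have "z \<in> C'" using maxchainD[OF mc] zB unfolding A'_def by auto
      then show "z \<in> C' \<inter> B" using zB by auto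
    qed
    then show "D = C' \<inter> B" using hD by auto
  qed
qed

lemma mc_from1:
  assumes mc: "maximal_chain (A,P) C" and vC: "v \<notin> C"
  shows "maximal_chain (A',P') C"
proof -
  have sub: "C \<subseteq> A" and ch: "is_chain P C" using mc unfolding maximal_chain_def by auto
  have nB: "\<forall>x\<in>C. x \<notin> B" using sub disj by auto
  have subA': "C \<subseteq> A'" using sub vC unfolding A'_def by auto
  have ch': "is_chain P' C" using ch nB subA' P'_same unfolding is_chain_def by (metis subsetD)
  show ?thesis
    unfolding maximal_chain_def
  proof (intro conjI allI impI)
    show "C \<subseteq> fst (A',P')" "is_chain (snd (A',P')) C" using subA' ch' by auto
    fix D assume hD: "C \<subseteq> D \<and> D \<subseteq> fst (A',P') \<and> is_chain (snd (A',P')) D"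
    have "D \<subseteq> C"
    proof
      fix z assume zD: "z \<in> D"
      show "z \<in> C"
      proof (cases "z \<in> B")
        case False
        then have zA: "z \<in> A" using zD hD unfolding A'_def by auto
        have "is_chain P (insert z C)"
          unfolding is_chain_insert
        proof (intro conjI ballI impI)
          show "is_chain P C" by (rule ch)
          fix x assume x: "x \<in> C" "x \<noteq> z"
          then have "(x,z) \<in> P' \<or> (z,x) \<in> P'" using hD zD unfolding is_chain_def by auto
          then show "(x,z) \<in> P \<or> (z,x) \<in> P" using P'_same False nB x by auto
        qed
        then show ?thesis using maxchainD[OF mc] zA by auto
      next
        case True
        have "is_chain P (insert v C)"
          unfolding is_chain_insert
        proof (intro conjI ballI impI)
          show "is_chain P C" by (rule ch)
          fix x assume x: "x \<in> C" "x \<noteq> v"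
          have "x \<noteq> z" using x nB True by auto
          then have "(x,z) \<in> P' \<or> (z,x) \<in> P'" using hD zD x unfolding is_chain_def by auto
          then show "(x,v) \<in> P \<or> (v,x) \<in> P" using P'_mixed1 P'_mixed2 True nB x by auto
        qed
        then have "v \<in> C" using maxchainD[OF mc] vA by auto
        then show ?thesis using vC by auto
      qed
    qed
    then show "D = C" using hD by auto
  qed
qed

lemma mc_from2:
  assumes mc: "maximal_chain (A,P) C" and vC: "v \<in> C" and mM: "maximal_chain (B,Q) M"
  shows "maximal_chain (A',P') (C - {v} \<union> M)"
proof -
  have sub: "C \<subseteq> A" and ch: "is_chain P C" using mc unfolding maximal_chain_def by auto
  have subM: "M \<subseteq> B" and chM: "is_chain Q M" using mM unfolding maximal_chain_def by auto
  have Mne: "M \<noteq> {}" using maxchain_ne[OF mM] Bne by auto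
  have nB: "\<forall>x\<in>C. x \<notin> B" using sub disj by auto
  have subA': "C - {v} \<union> M \<subseteq> A'" using sub subM unfolding A'_def by auto
  have ch': "is_chain P' (C - {v} \<union> M)"
    unfolding is_chain_def
  proof (intro ballI impI)
    fix x y assume x: "x \<in> C - {v} \<union> M" and y: "y \<in> C - {v} \<union> M" and xy: "x \<noteq> y"
    have xA: "x \<in> A'" and yA: "y \<in> A'" using x y subA' by auto
    consider "x \<in> M" "y \<in> M" | "x \<in> C - {v}" "y \<in> M" | "x \<in> M" "y \<in> C - {v}" | "x \<in> C - {v}" "y \<in> C - {v}"
      using x y by auto
    then show "(x,y) \<in> P' \<or> (y,x) \<in> P'"
    proof cases
      case 1
      then have "(x,y) \<in> Q \<or> (y,x) \<in> Q" using chM xy unfolding is_chain_def by auto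
      moreover have "x \<in> B" "y \<in> B" using 1 subM by auto
      ultimately show ?thesis using P'_BB by auto
    next
      case 2
      then have "(x,v) \<in> P \<or> (v,x) \<in> P" using ch vC unfolding is_chain_def by auto
      then show ?thesis using 2 nB subM P'_mixed1 P'_mixed2 xA yA by auto
    next
      case 3
      then have "(y,v) \<in> P \<or> (v,y) \<in> P" using ch vC unfolding is_chain_def by auto
      then show ?thesis using 3 nB subM P'_mixed1 P'_mixed2 xA yA by auto
    next
      case 4
      then have "(x,y) \<in> P \<or> (y,x) \<in> P" using ch xy unfolding is_chain_def by auto
      then show ?thesis using 4 nB P'_same xA yA by auto
    qed
  qed
  show ?thesis
    unfolding maximal_chain_def
  proof (intro conjI allI impI)
    show "C - {v} \<union> M \<subseteq> fst (A',P')" "is_chain (snd (A',P')) (C - {v} \<union> M)" using subA' ch' by auto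
    fix D assume hD: "C - {v} \<union> M \<subseteq> D \<and> D \<subseteq> fst (A',P') \<and> is_chain (snd (A',P')) D"
    have "D \<subseteq> C - {v} \<union> M"
    proof
      fix z assume zD: "z \<in> D"
      show "z \<in> C - {v} \<union> M"
      proof (cases "z \<in> B")
        case True
        have "is_chain Q (insert z M)"
          unfolding is_chain_insert
        proof (intro conjI ballI impI)
          show "is_chain Q M" by (rule chM)
          fix x assume x: "x \<in> M" "x \<noteq> z"
          then have "(x,z) \<in> P' \<or> (z,x) \<in> P'" using hD zD unfolding is_chain_def by auto
          then show "(x,z) \<in> Q \<or> (z,x) \<in> Q" using P'_BB True x subM by auto
        qed
        then have "z \<in> M" using maxchainD[OF mM] True by auto
        then show ?thesis by auto
      next
        case False
        then have zA: "z \<in> A" "z \<noteq> v" using zD hD unfolding A'_def by auto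
        obtain b where b: "b \<in> M" using Mne by auto
        have "is_chain P (insert z C)"
          unfolding is_chain_insert
        proof (intro conjI ballI impI)
          show "is_chain P C" by (rule ch)
          fix x assume x: "x \<in> C" "x \<noteq> z"
          show "(x,z) \<in> P \<or> (z,x) \<in> P"
          proof (cases "x = v")
            case True
            have "b \<noteq> z" using b subM False by auto
            then have "(b,z) \<in> P' \<or> (z,b) \<in> P'" using hD zD b unfolding is_chain_def by auto
            then show ?thesis using P'_mixed1 P'_mixed2 False b subM True by auto
          next
            case xv: False
            then have "(x,z) \<in> P' \<or> (z,x) \<in> P'" using hD zD x unfolding is_chain_def by auto
            then show ?thesis using P'_same False nB x by auto
          qed
        qed
        then have "z \<in> C" using maxchainD[OF mc] zA by auto
        then show ?thesis using zA by auto
      qed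
    qed
    then show "D = C - {v} \<union> M" using hD by auto
  qed
qed

lemma time_eq:
  "att_time (A',P') d = att_time (A,P) (d(v := att_time (B,Q) d))"
proof -
  define m where "m = att_time (B,Q) d"
  define dv where "dv = d(v := m)"
  let ?MC = "{C. maximal_chain (A,P) C}"
  let ?MC' = "{C. maximal_chain (A',P') C}"
  let ?MB = "{C. maximal_chain (B,Q) C}"
  have finMC: "finite ?MC" by (rule finite_subset[of _ "Pow A"]) (auto simp: maximal_chain_def finA)
  have finMC': "finite ?MC'" by (rule finite_subset[of _ "Pow A'"]) (auto simp: maximal_chain_def A'_fin)
  have finMB: "finite ?MB" by (rule finite_subset[of _ "Pow B"]) (auto simp: maximal_chain_def finB)
  have neMC: "?MC \<noteq> {}" using maxchain_exists[of "(A,P)"] finA by auto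
  have neMC': "?MC' \<noteq> {}" using maxchain_exists[of "(A',P')"] A'_fin by auto
  have neMB: "?MB \<noteq> {}" using maxchain_exists[of "(B,Q)"] finB by auto
  have A'ne: "A' \<noteq> {}" using Bne unfolding A'_def by auto
  have m_def': "m = Max ((\<lambda>C. \<Sum>a\<in>C. d a) ` ?MB)" unfolding m_def att_time_def using Bne by auto
  have lhs: "att_time (A',P') d = Max ((\<lambda>C. \<Sum>a\<in>C. d a) ` ?MC')" unfolding att_time_def using A'ne by auto
  have rhs: "att_time (A,P) dv = Max ((\<lambda>C. \<Sum>a\<in>C. dv a) ` ?MC)" unfolding att_time_def using vA by auto
  have le1: "\<exists>C\<in>?MC. (\<Sum>a\<in>C'. d a) \<le> (\<Sum>a\<in>C. dv a)" if C': "C' \<in> ?MC'" for C'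
  proof -
    have mcC': "maximal_chain (A',P') C'" using C' by auto
    have finC': "finite C'" using mcC' A'_fin finite_subset unfolding maximal_chain_def by auto
    have vC': "v \<notin> C'" using mcC' vA' unfolding maximal_chain_def by auto
    have inMC: "f ` C' \<in> ?MC" using mc_to[OF mcC'] by auto
    show ?thesis
    proof (cases "C' \<inter> B = {}")
      case True
      then have "f ` C' = C'" unfolding f_def by (auto simp: image_iff)
      moreover have "(\<Sum>a\<in>C'. dv a) = (\<Sum>a\<in>C'. d a)" using vC' unfolding dv_def by (intro sum.cong) auto
      ultimately have "(\<Sum>a\<in>C'. d a) \<le> (\<Sum>a\<in>f ` C'. dv a)" by simp
      then show ?thesis using inMC by blast
    next
      case False
      have fC: "f ` C' = insert v (C' - B)" using False unfolding f_def by (auto simp: image_iff)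
      have "(\<Sum>a\<in>C' \<inter> B. d a) \<le> m"
        unfolding m_def' using mc_B[OF mcC' False] finMB by (intro Max_ge) auto
      moreover have "(\<Sum>a\<in>C'. d a) = (\<Sum>a\<in>C' \<inter> B. d a) + (\<Sum>a\<in>C' - B. d a)"
        using finC' sum.Int_Diff by blast
      moreover have "(\<Sum>a\<in>insert v (C' - B). dv a) = m + (\<Sum>a\<in>C' - B. d a)"
      proof -
        have "(\<Sum>a\<in>insert v (C' - B). dv a) = dv v + (\<Sum>a\<in>C' - B. dv a)"
          using finC' vC' by (intro sum.insert) auto
        moreover have "(\<Sum>a\<in>C' - B. dv a) = (\<Sum>a\<in>C' - B. d a)"
          using vC' unfolding dv_def by (intro sum.cong) auto
        ultimately show ?thesis unfolding dv_def by simp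
      qed
      ultimately have "(\<Sum>a\<in>C'. d a) \<le> (\<Sum>a\<in>f ` C'. dv a)" unfolding fC by linarith
      then show ?thesis using inMC by blast
    qed
  qed
  have le2: "\<exists>C'\<in>?MC'. (\<Sum>a\<in>C. dv a) \<le> (\<Sum>a\<in>C'. d a)" if C: "C \<in> ?MC" for C
  proof -
    have mcC: "maximal_chain (A,P) C" using C by auto
    have finC: "finite C" using mcC finA finite_subset unfolding maximal_chain_def by auto
    have subC: "C \<subseteq> A" using mcC unfolding maximal_chain_def by auto
    show ?thesis
    proof (cases "v \<in> C")
      case False
      have "(\<Sum>a\<in>C. dv a) = (\<Sum>a\<in>C. d a)" using False unfolding dv_def by (intro sum.cong) auto
      then show ?thesis using mc_from1[OF mcC False] by force
    next
      case True
      have "m \<in> (\<lambda>C. \<Sum>a\<in>C. d a) ` ?MB" unfolding m_def' using finMB neMB by (intro Max_in) auto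
      then obtain M where M: "maximal_chain (B,Q) M" "(\<Sum>a\<in>M. d a) = m" by auto
      have finM: "finite M" using M finB finite_subset unfolding maximal_chain_def by auto
      have subM: "M \<subseteq> B" using M unfolding maximal_chain_def by auto
      have dj: "(C - {v}) \<inter> M = {}" using subC subM disj by auto
      have "(\<Sum>a\<in>C - {v} \<union> M. d a) = (\<Sum>a\<in>C - {v}. d a) + (\<Sum>a\<in>M. d a)"
        using finC finM dj by (simp add: sum.union_disjoint)
      moreover have "(\<Sum>a\<in>C. dv a) = dv v + (\<Sum>a\<in>C - {v}. dv a)"
        using finC True by (simp add: sum.remove)
      moreover have "(\<Sum>a\<in>C - {v}. dv a) = (\<Sum>a\<in>C - {v}. d a)" unfolding dv_def by (intro sum.cong) auto
      ultimately have "(\<Sum>a\<in>C. dv a) = (\<Sum>a\<in>C - {v} \<union> M. d a)" using M unfolding dv_def by simp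
      then show ?thesis using mc_from2[OF mcC True M(1)] by force
    qed
  qed
  have "Max ((\<lambda>C. \<Sum>a\<in>C. d a) ` ?MC') \<le> Max ((\<lambda>C. \<Sum>a\<in>C. dv a) ` ?MC)"
  proof (subst Max_le_iff)
    show "\<forall>x\<in>(\<lambda>C. \<Sum>a\<in>C. d a) ` ?MC'. x \<le> Max ((\<lambda>C. \<Sum>a\<in>C. dv a) ` ?MC)"
    proof
      fix x assume "x \<in> (\<lambda>C. \<Sum>a\<in>C. d a) ` ?MC'"
      then obtain C' where "C' \<in> ?MC'" "x = (\<Sum>a\<in>C'. d a)" by auto
      then obtain C where "C \<in> ?MC" "x \<le> (\<Sum>a\<in>C. dv a)" using le1 by blast
      then show "x \<le> Max ((\<lambda>C. \<Sum>a\<in>C. dv a) ` ?MC)" using finMC by (meson Max_ge finite_imageI image_eqI order_trans)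
    qed
  qed (use finMC' neMC' in auto)
  moreover have "Max ((\<lambda>C. \<Sum>a\<in>C. dv a) ` ?MC) \<le> Max ((\<lambda>C. \<Sum>a\<in>C. d a) ` ?MC')"
  proof (subst Max_le_iff)
    show "\<forall>x\<in>(\<lambda>C. \<Sum>a\<in>C. dv a) ` ?MC. x \<le> Max ((\<lambda>C. \<Sum>a\<in>C. d a) ` ?MC')"
    proof
      fix x assume "x \<in> (\<lambda>C. \<Sum>a\<in>C. dv a) ` ?MC"
      then obtain C where "C \<in> ?MC" "x = (\<Sum>a\<in>C. dv a)" by auto
      then obtain C' where "C' \<in> ?MC'" "x \<le> (\<Sum>a\<in>C'. d a)" using le2 by blast
      then show "x \<le> Max ((\<lambda>C. \<Sum>a\<in>C. d a) ` ?MC')" using finMC' by (meson Max_ge finite_imageI image_eqI order_trans)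
    qed
  qed (use finMC neMC in auto)
  ultimately show ?thesis using lhs rhs unfolding dv_def m_def by linarith
qed

end


lemma edgesI: "w \<in> nodes T \<Longrightarrow> c \<in> set (ch T w) \<Longrightarrow> (w,c) \<in> edges T"
  unfolding edges_def by auto

lemma desc_refl: "v \<in> desc T v" unfolding desc_def by auto

lemma desc_trans: "w \<in> desc T v \<Longrightarrow> u \<in> desc T w \<Longrightarrow> u \<in> desc T v"
  unfolding desc_def by auto

lemma desc_step: "w \<in> desc T v \<Longrightarrow> (w,c) \<in> edges T \<Longrightarrow> c \<in> desc T v"
  unfolding desc_def by (auto intro: rtrancl_into_rtrancl)

lemma edges_nodes: "wf_dat T \<Longrightarrow> edges T \<subseteq> nodes T \<times> nodes T"
  unfolding wf_dat_def edges_def by auto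

lemma desc_nodes: assumes "wf_dat T" "v \<in> nodes T" shows "desc T v \<subseteq> nodes T"
proof
  fix x assume "x \<in> desc T v"
  then have "(v,x) \<in> (edges T)\<^sup>*" unfolding desc_def by auto
  then show "x \<in> nodes T"
    by (induction rule: rtrancl_induct) (use assms edges_nodes in auto)
qed

lemma desc_sub:
  assumes "c \<in> desc T v" shows "desc T c \<subseteq> desc (sub_dat T v) c"
proof
  fix x assume "x \<in> desc T c"
  then have "(c,x) \<in> (edges T)\<^sup>*" unfolding desc_def by auto
  then have "(c,x) \<in> (edges (sub_dat T v))\<^sup>* \<and> x \<in> desc T v"
  proof (induction rule: rtrancl_induct)
    case base then show ?case using assms by auto
  next
    case (step y z)
    then have "(y,z) \<in> edges (sub_dat T v)" unfolding edges_def sub_dat_def by auto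
    then show ?case using step desc_step by (auto intro: rtrancl_into_rtrancl)
  qed
  then show "x \<in> desc (sub_dat T v) c" unfolding desc_def by auto
qed

lemma reach_sub:
  assumes wf: "wf_dat T" and vN: "v \<in> nodes T"
    and r: "reaches (sub_dat T v) Att w"
    and BA: "fst Att \<subseteq> A2" and inter: "A2 \<inter> desc T v \<subseteq> fst Att" and QP: "snd Att \<subseteq> P2"
  shows "w \<in> desc T v \<Longrightarrow> reaches T (A2,P2) w"
  using r
proof (induction rule: reaches.induct)
  case (r_bas w)
  then show ?case using BA by (intro reaches.r_bas) (auto simp: sub_dat_def)
next
  case (r_or w c)
  have "w \<in> nodes T" using r_or.prems desc_nodes[OF wf vN] by auto
  moreover have cs: "c \<in> set (ch T w)" using r_or by (simp add: sub_dat_def)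
  ultimately have "c \<in> desc T v" using desc_step[OF r_or.prems edgesI] by blast
  then have rc: "reaches T (A2,P2) c" using r_or.IH by blast
  have "gtype T w = OR" using r_or.hyps by (simp add: sub_dat_def)
  then show ?case using reaches.r_or[OF _ cs rc] by blast
next
  case (r_and w)
  have "\<forall>c\<in>set (ch T w). c \<in> desc T v" using desc_step[OF r_and.prems edgesI[OF subsetD[OF desc_nodes[OF wf vN] r_and.prems]]]
    by blast
  then show ?case using r_and by (intro reaches.r_and) (auto simp: sub_dat_def)
next
  case (r_sand w)
  have chd: "\<forall>c\<in>set (ch T w). c \<in> desc T v" using desc_step[OF r_sand.prems edgesI[OF subsetD[OF desc_nodes[OF wf vN] r_sand.prems]]]
    by blast
  show ?case
  proof (rule reaches.r_sand)
    show "gtype T w = SAND" using r_sand by (auto simp: sub_dat_def)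
    show "\<forall>c\<in>set (ch T w). reaches T (A2, P2) c" using r_sand chd by (auto simp: sub_dat_def)
    show "\<forall>i. Suc i < length (ch T w) \<longrightarrow>
        (\<forall>a\<in>fst (A2, P2) \<inter> bas_below T (ch T w ! i).
            \<forall>a'\<in>fst (A2, P2) \<inter> bas_below T (ch T w ! Suc i). (a, a') \<in> snd (A2, P2))"
    proof (intro allI impI ballI)
      fix i a a' assume i: "Suc i < length (ch T w)"
        and a: "a \<in> fst (A2, P2) \<inter> bas_below T (ch T w ! i)"
        and a': "a' \<in> fst (A2, P2) \<inter> bas_below T (ch T w ! Suc i)"
      have c1: "ch T w ! i \<in> desc T v" and c2: "ch T w ! Suc i \<in> desc T v" using chd i by auto
      have ad: "a \<in> desc T (ch T w ! i)" "a' \<in> desc T (ch T w ! Suc i)" using a a' unfolding bas_below_def by auto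
      have aB: "a \<in> fst Att" "a' \<in> fst Att" using inter a a' desc_trans[OF c1 ad(1)] desc_trans[OF c2 ad(2)] by auto
      have "a \<in> bas_below (sub_dat T v) (ch (sub_dat T v) w ! i)"
        using desc_sub[OF c1] ad a unfolding bas_below_def by (auto simp: sub_dat_def)
      moreover have "a' \<in> bas_below (sub_dat T v) (ch (sub_dat T v) w ! Suc i)"
        using desc_sub[OF c2] ad a' unfolding bas_below_def by (auto simp: sub_dat_def)
      moreover have "Suc i < length (ch (sub_dat T v) w)" using i by (simp add: sub_dat_def)
      ultimately have "(a,a') \<in> snd Att" using r_sand.hyps(2) aB by blast
      then show "(a, a') \<in> snd (A2, P2)" using QP by auto
    qed
  qed
qed



lemma con_edge:
  assumes "(z,y) \<in> edges T" "z \<notin> desc T v"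
  shows "(z,y) \<in> edges (contract T v)"
proof -
  have "z \<noteq> v" using assms(2) desc_refl by metis
  then show ?thesis using assms unfolding edges_def contract_def by auto
qed

lemma con_desc1:
  assumes "(x,y) \<in> (edges T)\<^sup>*" "y \<notin> desc T v"
  shows "(x,y) \<in> (edges (contract T v))\<^sup>*"
  using assms
proof (induction rule: rtrancl_induct)
  case base then show ?case by auto
next
  case (step z y)
  have "z \<notin> desc T v" using step desc_step by metis
  then show ?case using step con_edge by (metis rtrancl.rtrancl_into_rtrancl)
qed

lemma con_desc2:
  assumes md: "is_module T v" and "(x,y) \<in> (edges T)\<^sup>*" "y \<in> desc T v" "x \<notin> desc T v - {v}"
  shows "(x,v) \<in> (edges (contract T v))\<^sup>*"
  using assms(2-)
proof (induction rule: rtrancl_induct)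
  case base then show ?case by auto
next
  case (step z y)
  show ?case
  proof (cases "z \<in> desc T v")
    case True then show ?thesis using step by auto
  next
    case False
    have "y = v"
    proof (rule ccontr)
      assume "y \<noteq> v"
      then have "y \<in> desc T v - {v}" using step by auto
      then have "z \<in> desc T v" using md step(2) unfolding is_module_def by blast
      then show False using False by auto
    qed
    have "(x,z) \<in> (edges (contract T v))\<^sup>*" using con_desc1[OF step(1) False] .
    moreover have "(z,v) \<in> edges (contract T v)" using con_edge[OF step(2) False] \<open>y = v\<close> by simp
    ultimately show ?thesis by (rule rtrancl.rtrancl_into_rtrancl)
  qed
qed

lemma bb_con_a:
  assumes "a \<in> bas_below T x" "a \<notin> desc T v"
  shows "a \<in> bas_below (contract T v) x"
proof -
  have "(x,a) \<in> (edges T)\<^sup>*" using assms unfolding bas_below_def desc_def by auto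
  then have "(x,a) \<in> (edges (contract T v))\<^sup>*" using con_desc1 assms(2) by metis
  moreover have "a \<noteq> v" using assms(2) desc_refl by metis
  ultimately show ?thesis using assms unfolding bas_below_def desc_def contract_def by auto
qed

lemma bb_con_b:
  assumes md: "is_module T v" and "a \<in> bas_below T x" "a \<in> desc T v" "x \<notin> desc T v - {v}"
  shows "v \<in> bas_below (contract T v) x"
proof -
  have "(x,a) \<in> (edges T)\<^sup>*" using assms unfolding bas_below_def desc_def by auto
  then have "(x,v) \<in> (edges (contract T v))\<^sup>*" using con_desc2[OF md] assms by metis
  then show ?thesis unfolding bas_below_def desc_def by (auto simp: contract_def)
qed

lemma child_out:
  assumes md: "is_module T v" and "w \<in> nodes T" "w \<notin> desc T v" "c \<in> set (ch T w)"
  shows "c \<notin> desc T v - {v}"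
proof
  assume "c \<in> desc T v - {v}"
  moreover have "(w,c) \<in> edges T" using edgesI[OF assms(2,4)] .
  ultimately have "w \<in> desc T v" using md unfolding is_module_def by blast
  then show False using assms(3) by auto
qed

lemma child_nodes: "wf_dat T \<Longrightarrow> w \<in> nodes T \<Longrightarrow> c \<in> set (ch T w) \<Longrightarrow> c \<in> nodes T"
  unfolding wf_dat_def by blast

lemma reach_con:
  assumes wf: "wf_dat T" and md: "is_module T v"
    and att: "is_attack (contract T v) (A,P)"
    and Bd: "B \<subseteq> desc T v - {v}" and Bv: "B \<noteq> {} \<Longrightarrow> v \<in> A"
    and A2: "A2 = A - {v} \<union> B"
    and P1: "\<And>a a'. (a,a') \<in> P \<Longrightarrow> a \<in> A - {v} \<Longrightarrow> a' \<in> A - {v} \<Longrightarrow> (a,a') \<in> P2"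
    and P2: "\<And>a b. (a,v) \<in> P \<Longrightarrow> a \<in> A - {v} \<Longrightarrow> b \<in> B \<Longrightarrow> (a,b) \<in> P2"
    and P3: "\<And>a b. (v,a) \<in> P \<Longrightarrow> a \<in> A - {v} \<Longrightarrow> b \<in> B \<Longrightarrow> (b,a) \<in> P2"
    and rv: "v \<in> A \<Longrightarrow> reaches T (A2,P2) v"
    and Anodes: "A \<subseteq> nodes T - (desc T v - {v})" and irr: "irrefl P"
    and r: "reaches (contract T v) (A,P) w"
  shows "w \<in> nodes T \<Longrightarrow> w \<notin> desc T v - {v} \<Longrightarrow> reaches T (A2,P2) w"
  using r
proof (induction rule: reaches.induct)
  case (r_bas w)
  show ?case
  proof (cases "w = v")
    case True then show ?thesis using rv r_bas by auto
  next
    case False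
    then have "gtype T w = BAS" "w \<in> A2" using r_bas A2 by (auto simp: contract_def)
    then show ?thesis by (intro reaches.r_bas) auto
  qed
next
  case (r_or w c)
  have g0: "gtype (contract T v) w = OR" using r_or.hyps(1) by simp
  have wv: "w \<noteq> v" using g0 by (auto simp: contract_def)
  have g: "gtype T w = OR" using g0 wv by (simp add: contract_def)
  have cs: "c \<in> set (ch T w)" using r_or wv by (auto simp: contract_def)
  have wd: "w \<notin> desc T v" using wv r_or.prems by auto
  have "c \<in> nodes T" using child_nodes[OF wf r_or.prems(1) cs] .
  moreover have "c \<notin> desc T v - {v}" using child_out[OF md r_or.prems(1) wd cs] .
  ultimately have "reaches T (A2,P2) c" using r_or.IH by blast
  then show ?case using reaches.r_or[OF g cs] by blast
next
  case (r_and w)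
  have g0: "gtype (contract T v) w = AND" using r_and.hyps(1) by simp
  have wv: "w \<noteq> v" using g0 by (auto simp: contract_def)
  have g: "gtype T w = AND" using g0 wv by (simp add: contract_def)
  have wd: "w \<notin> desc T v" using wv r_and.prems by auto
  have "\<forall>c\<in>set (ch T w). reaches T (A2,P2) c"
  proof
    fix c assume cs: "c \<in> set (ch T w)"
    have "c \<in> nodes T" using child_nodes[OF wf r_and.prems(1) cs] .
    moreover have "c \<notin> desc T v - {v}" using child_out[OF md r_and.prems(1) wd cs] .
    ultimately show "reaches T (A2,P2) c" using r_and.IH cs wv by (auto simp: contract_def)
  qed
  then show ?case using reaches.r_and[OF g] by blast
next
  case (r_sand w)
  have g0: "gtype (contract T v) w = SAND" using r_sand.hyps(1) by simp
  have wv: "w \<noteq> v" using g0 by (auto simp: contract_def)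
  have g: "gtype T w = SAND" using g0 wv by (simp add: contract_def)
  have wd: "w \<notin> desc T v" using wv r_sand.prems by auto
  have chc: "ch (contract T v) w = ch T w" using wv by (simp add: contract_def)
  have cgood: "c \<in> nodes T \<and> c \<notin> desc T v - {v}" if cs: "c \<in> set (ch T w)" for c
    using child_nodes[OF wf r_sand.prems(1) cs] child_out[OF md r_sand.prems(1) wd cs] by auto
  have "\<forall>c\<in>set (ch T w). reaches T (A2,P2) c"
  proof
    fix c assume cs: "c \<in> set (ch T w)"
    show "reaches T (A2,P2) c" using r_sand.IH cs chc cgood[OF cs] by auto
  qed
  moreover have "\<forall>i. Suc i < length (ch T w) \<longrightarrow>
        (\<forall>a\<in>fst (A2, P2) \<inter> bas_below T (ch T w ! i).
            \<forall>a'\<in>fst (A2, P2) \<inter> bas_below T (ch T w ! Suc i). (a, a') \<in> snd (A2, P2))"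
  proof (intro allI impI ballI)
    fix i a a' assume i: "Suc i < length (ch T w)"
      and a: "a \<in> fst (A2, P2) \<inter> bas_below T (ch T w ! i)"
      and a': "a' \<in> fst (A2, P2) \<inter> bas_below T (ch T w ! Suc i)"
    have H: "\<forall>a\<in>A \<inter> bas_below (contract T v) (ch T w ! i).
            \<forall>a'\<in>A \<inter> bas_below (contract T v) (ch T w ! Suc i). (a, a') \<in> P"
      using r_sand.hyps(2) i chc by auto
    have c1: "ch T w ! i \<notin> desc T v - {v}" and c2: "ch T w ! Suc i \<notin> desc T v - {v}"
      using cgood i by auto
    have lA: "x \<in> A \<inter> bas_below (contract T v) y"
      if "x \<in> A - {v}" "x \<in> bas_below T y" for x y
    proof -
      have "x \<notin> desc T v" using that Anodes by auto
      then show ?thesis using bb_con_a that by auto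
    qed
    have lB: "v \<in> A \<inter> bas_below (contract T v) y"
      if "x \<in> B" "x \<in> bas_below T y" "y \<notin> desc T v - {v}" for x y
    proof -
      have xd: "x \<in> desc T v" using that(1) Bd by auto
      have "v \<in> bas_below (contract T v) y" using bb_con_b[OF md that(2) xd that(3)] .
      moreover have "v \<in> A" using Bv that(1) by auto
      ultimately show ?thesis by auto
    qed
    have ai: "a \<in> bas_below T (ch T w ! i)" and ai': "a' \<in> bas_below T (ch T w ! Suc i)" using a a' by auto
    consider "a \<in> A - {v}" "a' \<in> A - {v}" | "a \<in> A - {v}" "a' \<in> B" | "a \<in> B" "a' \<in> A - {v}" | "a \<in> B" "a' \<in> B"
      using a a' A2 by auto
    then show "(a, a') \<in> snd (A2, P2)"
    proof cases
      case 1
      have "a \<in> A \<inter> bas_below (contract T v) (ch T w ! i)" using lA[OF 1(1) ai] .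
      moreover have "a' \<in> A \<inter> bas_below (contract T v) (ch T w ! Suc i)" using lA[OF 1(2) ai'] .
      ultimately have "(a,a') \<in> P" using H by blast
      then show ?thesis using P1 1 by auto
    next
      case 2
      have "a \<in> A \<inter> bas_below (contract T v) (ch T w ! i)" using lA[OF 2(1) ai] .
      moreover have "v \<in> A \<inter> bas_below (contract T v) (ch T w ! Suc i)" using lB[OF 2(2) ai' c2] .
      ultimately have "(a,v) \<in> P" using H by blast
      then show ?thesis using P2 2 by auto
    next
      case 3
      have "v \<in> A \<inter> bas_below (contract T v) (ch T w ! i)" using lB[OF 3(1) ai c1] .
      moreover have "a' \<in> A \<inter> bas_below (contract T v) (ch T w ! Suc i)" using lA[OF 3(2) ai'] .
      ultimately have "(v,a') \<in> P" using H by blast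
      then show ?thesis using P3 3 by auto
    next
      case 4
      have "v \<in> A \<inter> bas_below (contract T v) (ch T w ! i)" using lB[OF 4(1) ai c1] .
      moreover have "v \<in> A \<inter> bas_below (contract T v) (ch T w ! Suc i)" using lB[OF 4(2) ai' c2] .
      ultimately have "(v,v) \<in> P" using H by blast
      then show ?thesis using irr unfolding irrefl_def by blast
    qed
  qed
  ultimately show ?case using reaches.r_sand[OF g] by auto
qed



lemma reach_ne:
  assumes "reaches X Att w"
  shows "(\<forall>x\<in>S. set (ch X x) \<subseteq> S \<and> (gtype X x \<noteq> BAS \<longrightarrow> ch X x \<noteq> [])) \<Longrightarrow> w \<in> S \<Longrightarrow> fst Att \<noteq> {}"
  using assms
proof (induction rule: reaches.induct)
  case (r_bas w) then show ?case by auto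
next
  case (r_or w c)
  have "c \<in> S" using r_or.prems r_or.hyps(2) by blast
  then show ?case using r_or.IH r_or.prems(1) by blast
next
  case (r_and w)
  have "ch X w \<noteq> []" using r_and.prems r_and.hyps(1) by auto
  then obtain c where c: "c \<in> set (ch X w)" by (cases "ch X w") auto
  have "c \<in> S" using r_and.prems c by blast
  then show ?case using r_and.IH c r_and.prems(1) by blast
next
  case (r_sand w)
  have "ch X w \<noteq> []" using r_sand.prems r_sand.hyps(1) by auto
  then obtain c where c: "c \<in> set (ch X w)" by (cases "ch X w") auto
  have "c \<in> S" using r_sand.prems c by blast
  then show ?case using r_sand c by blast
qed

lemma wf_parts: assumes "wf_dat T"
  shows "finite (nodes T)" "root T \<in> nodes T" "acyclic (edges T)"
    "\<forall>v\<in>nodes T. (root T, v) \<in> (edges T)\<^sup>*"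
    "\<forall>v\<in>nodes T. gtype T v = BAS \<longleftrightarrow> ch T v = []"
  using assms unfolding wf_dat_def by blast+

lemma wf_fin: "wf_dat T \<Longrightarrow> finite (nodes T)" using wf_parts(1) .
lemma wf_root: "wf_dat T \<Longrightarrow> root T \<in> nodes T" using wf_parts(2) .
lemma wf_reach: "wf_dat T \<Longrightarrow> x \<in> nodes T \<Longrightarrow> (root T, x) \<in> (edges T)\<^sup>*" using wf_parts(4) by blast
lemma wf_acyc: "wf_dat T \<Longrightarrow> acyclic (edges T)" using wf_parts(3) .
lemma wf_bas: "wf_dat T \<Longrightarrow> x \<in> nodes T \<Longrightarrow> gtype T x = BAS \<longleftrightarrow> ch T x = []" using wf_parts(5) by blast

lemma att_time_cong:
  assumes "\<And>a. a \<in> fst Att \<Longrightarrow> d a = d' a"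
  shows "att_time Att d = att_time Att d'"
proof -
  have "(\<lambda>C. \<Sum>a\<in>C. d a) ` {C. maximal_chain Att C} = (\<lambda>C. \<Sum>a\<in>C. d' a) ` {C. maximal_chain Att C}"
  proof (rule image_cong)
    fix C assume "C \<in> {C. maximal_chain Att C}"
    then have "C \<subseteq> fst Att" unfolding maximal_chain_def by auto
    then show "(\<Sum>a\<in>C. d a) = (\<Sum>a\<in>C. d' a)" using assms by (intro sum.cong) auto
  qed simp
  then show ?thesis unfolding att_time_def by presburger
qed

theorem mainTheorem10:
  fixes T :: "'n dat" and v :: 'n and d :: "'n \<Rightarrow> real"
    and Att :: "'n set \<times> ('n \<times> 'n) set"
  assumes "wf_dat T"
    and "\<forall>a \<in> bas_nodes T. d a \<ge> 0"
    and "is_module T v"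
    and "min_time (sub_dat T v) d < \<infinity>"
    and "successful (contract T v) Att"
  shows "\<exists>Att'. successful T Att' \<and> att_time Att' d = att_time Att (contract_dur T v d)"
proof -
  note wf = assms(1) and md = assms(3)
  obtain A P where Att: "Att = (A,P)" by (cases Att)
  have attc: "is_attack (contract T v) (A,P)" and rc0: "reaches (contract T v) (A,P) (root (contract T v))"
    using assms(5) Att unfolding successful_def by auto
  have "root (contract T v) = root T" by (simp add: contract_def)
  then have rc: "reaches (contract T v) (A,P) (root T)" using rc0 by simp
  have vN: "v \<in> nodes T" and vnb: "gtype T v \<noteq> BAS" using md unfolding is_module_def by auto
  have Anodes: "A \<subseteq> nodes T - (desc T v - {v})"
    using attc unfolding is_attack_def bas_nodes_def contract_def by auto
  have Abas: "\<forall>a\<in>A - {v}. gtype T a = BAS"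
  proof
    fix a assume a: "a \<in> A - {v}"
    then have "gtype (contract T v) a = BAS" using attc unfolding is_attack_def bas_nodes_def by auto
    then show "gtype T a = BAS" using a by (simp add: contract_def)
  qed
  have PA: "P \<subseteq> A \<times> A" and irrP: "irrefl P" and trP: "trans P"
    using attc unfolding is_attack_def by auto
  have finT: "finite (nodes T)" using wf_fin[OF wf] .
  have rootN: "root T \<in> nodes T" using wf_root[OF wf] .
  have finA: "finite A" using Anodes finT finite_subset by blast
  have rootout: "root T \<notin> desc T v - {v}"
  proof
    assume h: "root T \<in> desc T v - {v}"
    have "(root T, v) \<in> (edges T)\<^sup>*" using wf_reach[OF wf vN] .
    moreover have "(v, root T) \<in> (edges T)\<^sup>+" using h unfolding desc_def
      by (auto simp: rtrancl_eq_or_trancl)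
    ultimately have "(v,v) \<in> (edges T)\<^sup>+" by auto
    then show False using wf_acyc[OF wf] unfolding acyclic_def by blast
  qed
  have descN: "desc T v \<subseteq> nodes T" using desc_nodes[OF wf vN] .
  have findesc: "finite (desc T v)" using descN finT finite_subset by blast
  define S where "S = {Att. successful (sub_dat T v) Att}"
  have Ssub: "S \<subseteq> Pow (desc T v) \<times> Pow (desc T v \<times> desc T v)"
    unfolding S_def successful_def is_attack_def bas_nodes_def by (auto simp: sub_dat_def)
  have finS: "finite S" using finite_subset[OF Ssub] findesc by auto
  have Sne: "S \<noteq> {}"
  proof
    assume "S = {}"
    then have "min_time (sub_dat T v) d = \<infinity>" unfolding min_time_def S_def[symmetric] by (simp add: top_ereal_def)
    then show False using assms(4) by auto
  qed
  let ?I = "(\<lambda>Att. ereal (att_time Att d)) ` S"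
  have "min_time (sub_dat T v) d = Inf ?I" unfolding min_time_def S_def by simp
  also have "\<dots> = Min ?I" using finS Sne by (simp add: Min_Inf)
  finally have "min_time (sub_dat T v) d \<in> ?I" using finS Sne by (metis Min_in finite_imageI image_is_empty)
  then obtain B Q where BQS: "(B,Q) \<in> S" and BQt: "min_time (sub_dat T v) d = ereal (att_time (B,Q) d)"
    by auto
  have cd: "contract_dur T v d = d(v := att_time (B,Q) d)"
    unfolding contract_dur_def BQt by simp
  have attB: "is_attack (sub_dat T v) (B,Q)" and rB0: "reaches (sub_dat T v) (B,Q) (root (sub_dat T v))"
    using BQS unfolding S_def successful_def by auto
  have "root (sub_dat T v) = v" by (simp add: sub_dat_def)
  then have rB: "reaches (sub_dat T v) (B,Q) v" using rB0 by simp
  have Bdesc: "B \<subseteq> desc T v" and Bbas: "\<forall>b\<in>B. gtype T b = BAS"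
    using attB unfolding is_attack_def bas_nodes_def by (auto simp: sub_dat_def)
  have QB: "Q \<subseteq> B \<times> B" and irrQ: "irrefl Q" and trQ: "trans Q"
    using attB unfolding is_attack_def by auto
  have vB: "v \<notin> B" using Bbas vnb by auto
  have Bd: "B \<subseteq> desc T v - {v}" using Bdesc vB by auto
  have finB: "finite B" using Bdesc findesc finite_subset by blast
  have Bne: "B \<noteq> {}"
  proof -
    have "\<forall>x\<in>desc T v. set (ch (sub_dat T v) x) \<subseteq> desc T v \<and> (gtype (sub_dat T v) x \<noteq> BAS \<longrightarrow> ch (sub_dat T v) x \<noteq> [])"
    proof
      fix x assume x: "x \<in> desc T v"
      have xN: "x \<in> nodes T" using x descN by auto
      have "set (ch T x) \<subseteq> desc T v" using desc_step[OF x edgesI[OF xN]] by auto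
      moreover have "gtype T x \<noteq> BAS \<longrightarrow> ch T x \<noteq> []" using wf_bas[OF wf xN] by blast
      ultimately show "set (ch (sub_dat T v) x) \<subseteq> desc T v \<and> (gtype (sub_dat T v) x \<noteq> BAS \<longrightarrow> ch (sub_dat T v) x \<noteq> [])"
        by (simp add: sub_dat_def)
    qed
    from reach_ne[OF rB this desc_refl] show ?thesis by simp
  qed
  show ?thesis
  proof (cases "v \<in> A")
    case True
    have disj: "A \<inter> B = {}" using Anodes Bd by auto
    interpret R: repl A P B Q v
      using finA finB PA irrP trP QB irrQ trQ True Bne disj by unfold_locales auto
    have A'sub: "R.A' \<subseteq> bas_nodes T"
      using Anodes Abas Bdesc descN Bbas unfolding R.A'_def bas_nodes_def by auto
    have QP: "Q \<subseteq> R.P'" using QB R.P'_BB by auto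
    have rv: "reaches T (R.A', R.P') v"
    proof (rule reach_sub[OF wf vN rB])
      show "fst (B,Q) \<subseteq> R.A'" unfolding R.A'_def by auto
      show "R.A' \<inter> desc T v \<subseteq> fst (B,Q)" using Anodes unfolding R.A'_def by auto
      show "snd (B,Q) \<subseteq> R.P'" using QP by auto
      show "v \<in> desc T v" by (rule desc_refl)
    qed
    have rr: "reaches T (R.A', R.P') (root T)"
    proof (rule reach_con[OF wf md attc Bd _ R.A'_def _ _ _ _ Anodes irrP rc rootN rootout])
      show "B \<noteq> {} \<Longrightarrow> v \<in> A" using True .
      show "\<And>a a'. (a,a') \<in> P \<Longrightarrow> a \<in> A - {v} \<Longrightarrow> a' \<in> A - {v} \<Longrightarrow> (a,a') \<in> R.P'"
        using R.P'_same disj unfolding R.A'_def by auto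
      show "\<And>a b. (a,v) \<in> P \<Longrightarrow> a \<in> A - {v} \<Longrightarrow> b \<in> B \<Longrightarrow> (a,b) \<in> R.P'"
        using R.P'_mixed1 disj unfolding R.A'_def by auto
      show "\<And>a b. (v,a) \<in> P \<Longrightarrow> a \<in> A - {v} \<Longrightarrow> b \<in> B \<Longrightarrow> (b,a) \<in> R.P'"
        using R.P'_mixed2 disj unfolding R.A'_def by auto
      show "v \<in> A \<Longrightarrow> reaches T (R.A', R.P') v" using rv .
    qed
    have "is_attack T (R.A', R.P')"
      unfolding is_attack_def using A'sub R.P'_sub R.P'_irrefl R.P'_trans by auto
    then have "successful T (R.A', R.P')" using rr unfolding successful_def by auto
    moreover have "att_time (R.A', R.P') d = att_time Att (contract_dur T v d)"
      unfolding Att cd by (rule R.time_eq)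
    ultimately show ?thesis by blast
  next
    case False
    have rr: "reaches T (A, P) (root T)"
    proof (rule reach_con[OF wf md attc _ _ _ _ _ _ _ Anodes irrP rc rootN rootout, where B = "{}"])
      show "A = A - {v} \<union> {}" using False by auto
      show "{} \<subseteq> desc T v - {v}" by simp
      show "{} \<noteq> {} \<Longrightarrow> v \<in> A" by simp
      show "\<And>a a'. (a,a') \<in> P \<Longrightarrow> a \<in> A - {v} \<Longrightarrow> a' \<in> A - {v} \<Longrightarrow> (a,a') \<in> P" by simp
      show "\<And>a b. (a,v) \<in> P \<Longrightarrow> a \<in> A - {v} \<Longrightarrow> b \<in> {} \<Longrightarrow> (a,b) \<in> P" by simp
      show "\<And>a b. (v,a) \<in> P \<Longrightarrow> a \<in> A - {v} \<Longrightarrow> b \<in> {} \<Longrightarrow> (b,a) \<in> P" by simp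
      show "v \<in> A \<Longrightarrow> reaches T (A, P) v" using False by simp
    qed
    have "A \<subseteq> bas_nodes T" using Anodes Abas False unfolding bas_nodes_def by auto
    then have "is_attack T (A, P)"
      unfolding is_attack_def using PA irrP trP by auto
    then have "successful T (A, P)" using rr unfolding successful_def by auto
    moreover have "att_time (A, P) d = att_time Att (contract_dur T v d)"
      unfolding Att cd using False by (intro att_time_cong) auto
    ultimately show ?thesis by blast
  qed
qed


end
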